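(* Let $M$ be a $3$-connected simple matroid with $r(M)\ge 4$, and let $x_1,\dots,x_n,y_1,\dots,y_n$ ($n\ge 3$) be a carambole of $M$ with filament $L=\{y_1,\dots,y_n\}$ and hull $X=\{x_1,\dots,x_n\}$. Then $r^*_M(X)=2$, and $|X|=|L|$ (i.e. $x_1,\dots,x_n$ are distinct).
   Context: A line of $M$ is a rank-$2$ set. For $n\ge3$, a sequence $x_1,\dots,x_n,y_1,\dots,y_n$ of elements of $M$ is a carambole of $M$ if $L:=\{y_1,\dots,y_n\}$ is a line of $M$ with $n$ distinct elements such that $\mathrm{si}(M/L)$ is $3$-connected, and, for each $i$, $(L-y_i)\cup x_i$ is a cocircuit of $M$. $L$ is the filament and $X:=\{x_1,\dots,x_n\}$ the hull of the carambole. $r^*_M$ denotes the corank (rank function of the dual $M^*$). *)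

theory Defs
  imports Main
begin

definition matroid :: "'a set \<Rightarrow> ('a set \<Rightarrow> nat) \<Rightarrow> bool" where
  "matroid E r \<longleftrightarrow> finite E
     \<and> (\<forall>A. A \<subseteq> E \<longrightarrow> r A \<le> card A)
     \<and> (\<forall>A B. A \<subseteq> B \<and> B \<subseteq> E \<longrightarrow> r A \<le> r B)
     \<and> (\<forall>A B. A \<subseteq> E \<and> B \<subseteq> E \<longrightarrow> r (A \<union> B) + r (A \<inter> B) \<le> r A + r B)"

definition indep :: "('a set \<Rightarrow> nat) \<Rightarrow> 'a set \<Rightarrow> bool" where
  "indep r A \<longleftrightarrow> r A = card A"

definition circuit :: "'a set \<Rightarrow> ('a set \<Rightarrow> nat) \<Rightarrow> 'a set \<Rightarrow> bool" where
  "circuit E r C \<longleftrightarrow> C \<subseteq> E \<and> \<not> indep r C \<and> (\<forall>D. D \<subset> C \<longrightarrow> indep r D)"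

definition loop :: "'a set \<Rightarrow> ('a set \<Rightarrow> nat) \<Rightarrow> 'a \<Rightarrow> bool" where
  "loop E r x \<longleftrightarrow> circuit E r {x}"

definition parallel :: "'a set \<Rightarrow> ('a set \<Rightarrow> nat) \<Rightarrow> 'a \<Rightarrow> 'a \<Rightarrow> bool" where
  "parallel E r x y \<longleftrightarrow> x \<noteq> y \<and> circuit E r {x, y}"

text \<open>Simple: no loops and no parallel pairs, i.e. every circuit has at least 3 elements.\<close>
definition simple :: "'a set \<Rightarrow> ('a set \<Rightarrow> nat) \<Rightarrow> bool" where
  "simple E r \<longleftrightarrow> (\<forall>C. circuit E r C \<longrightarrow> card C \<ge> 3)"

definition dual_rank :: "'a set \<Rightarrow> ('a set \<Rightarrow> nat) \<Rightarrow> 'a set \<Rightarrow> nat" where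
  "dual_rank E r A = card A + r (E - A) - r E"

definition cocircuit :: "'a set \<Rightarrow> ('a set \<Rightarrow> nat) \<Rightarrow> 'a set \<Rightarrow> bool" where
  "cocircuit E r C \<longleftrightarrow> circuit E (dual_rank E r) C"

definition contract_rank :: "('a set \<Rightarrow> nat) \<Rightarrow> 'a set \<Rightarrow> 'a set \<Rightarrow> nat" where
  "contract_rank r L A = r (A \<union> L) - r L"

definition separation :: "'a set \<Rightarrow> ('a set \<Rightarrow> nat) \<Rightarrow> nat \<Rightarrow> 'a set \<Rightarrow> bool" where
  "separation E r k A \<longleftrightarrow> A \<subseteq> E \<and> card A \<ge> k \<and> card (E - A) \<ge> k
      \<and> r A + r (E - A) - r E < k"

definition n_connected :: "nat \<Rightarrow> 'a set \<Rightarrow> ('a set \<Rightarrow> nat) \<Rightarrow> bool" where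
  "n_connected n E r \<longleftrightarrow> (\<forall>k A. 1 \<le> k \<and> k < n \<longrightarrow> \<not> separation E r k A)"

definition simplification_set :: "'a set \<Rightarrow> ('a set \<Rightarrow> nat) \<Rightarrow> 'a set \<Rightarrow> bool" where
  "simplification_set E r S \<longleftrightarrow> S \<subseteq> E
     \<and> (\<forall>x\<in>S. \<not> loop E r x)
     \<and> (\<forall>x\<in>S. \<forall>y\<in>S. \<not> parallel E r x y)
     \<and> (\<forall>x\<in>E. \<not> loop E r x \<longrightarrow> x \<in> S \<or> (\<exists>y\<in>S. parallel E r x y))"

text \<open>si(M) is 3-connected (simplifications are unique up to isomorphism, so
  existence of a 3-connected one is the same as all being 3-connected).\<close>
definition si_3_connected :: "'a set \<Rightarrow> ('a set \<Rightarrow> nat) \<Rightarrow> bool" where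
  "si_3_connected E r \<longleftrightarrow> (\<exists>S. simplification_set E r S \<and> n_connected 3 S r)"

definition line :: "'a set \<Rightarrow> ('a set \<Rightarrow> nat) \<Rightarrow> 'a set \<Rightarrow> bool" where
  "line E r L \<longleftrightarrow> L \<subseteq> E \<and> r L = 2"

definition carambole :: "'a set \<Rightarrow> ('a set \<Rightarrow> nat) \<Rightarrow> nat \<Rightarrow> (nat \<Rightarrow> 'a) \<Rightarrow> (nat \<Rightarrow> 'a) \<Rightarrow> bool" where
  "carambole E r n x y \<longleftrightarrow> n \<ge> 3
     \<and> (\<forall>i\<in>{1..n}. x i \<in> E \<and> y i \<in> E)
     \<and> line E r (y ` {1..n}) \<and> card (y ` {1..n}) = n
     \<and> si_3_connected (E - y ` {1..n}) (contract_rank r (y ` {1..n}))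
     \<and> (\<forall>i\<in>{1..n}. cocircuit E r ((y ` {1..n} - {y i}) \<union> {x i}))"

end

theory Submission
  imports Defs
begin

lemma m_fin: "matroid E r \<Longrightarrow> finite E"
  unfolding matroid_def by (elim conjE)

lemma m_card: "matroid E r \<Longrightarrow> A \<subseteq> E \<Longrightarrow> r A \<le> card A"
  unfolding matroid_def apply (elim conjE) apply (drule spec[of _ A]) by (erule mp)

lemma m_mono: assumes "matroid E r" "A \<subseteq> B" "B \<subseteq> E" shows "r A \<le> r B"
proof -
  have "\<forall>A B. A \<subseteq> B \<and> B \<subseteq> E \<longrightarrow> r A \<le> r B"
    using assms(1) unfolding matroid_def by (elim conjE) assumption
  thus ?thesis using assms(2,3) by blast
qed

lemma m_sub: assumes "matroid E r" "A \<subseteq> E" "B \<subseteq> E" shows "r (A \<union> B) + r (A \<inter> B) \<le> r A + r B"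
proof -
  have "\<forall>A B. A \<subseteq> E \<and> B \<subseteq> E \<longrightarrow> r (A \<union> B) + r (A \<inter> B) \<le> r A + r B"
    using assms(1) unfolding matroid_def by (elim conjE) assumption
  thus ?thesis using assms(2,3) by blast
qed

lemma cocirc_dep:
  assumes m: "matroid E r" and c: "cocircuit E r C"
  shows "r (E - C) < r E \<and> C \<subseteq> E"
proof -
  have mono: "r (E - C) \<le> r E" by (rule m_mono[OF m]) auto
  have "C \<subseteq> E" "\<not> (card C + r (E - C) - r E = card C)"
    using c unfolding cocircuit_def circuit_def indep_def dual_rank_def by auto
  thus ?thesis using mono by (cases "r (E - C) < r E") auto
qed

lemma cocirc_min:
  assumes m: "matroid E r" and c: "cocircuit E r C" and d: "D \<subset> C" "D \<noteq> {}"
  shows "r (E - D) = r E"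
proof -
  have CE: "C \<subseteq> E" using c unfolding cocircuit_def circuit_def by auto
  have fin: "finite D" using m_fin[OF m] CE d by (meson finite_subset psubset_imp_subset)
  have pos: "card D > 0" using fin d by auto
  have mono: "r (E - D) \<le> r E" by (rule m_mono[OF m]) auto
  have "card D + r (E - D) - r E = card D"
    using c d unfolding cocircuit_def circuit_def indep_def dual_rank_def by auto
  thus ?thesis using mono pos by arith
qed

lemma coloops:
  assumes m: "matroid E r" and F: "F \<subseteq> E" "r F = r E"
    and h: "\<forall>z\<in>X. r (F - {z}) < r E"
    and S: "finite S" "S \<subseteq> X"
  shows "r (F - S) + card S \<le> r E"
  using S
proof (induction S rule: finite_induct)
  case empty
  then show ?case using F by simp
next
  case (insert a S)
  have sub: "\<And>A B. A \<subseteq> E \<Longrightarrow> B \<subseteq> E \<Longrightarrow> r (A \<union> B) + r (A \<inter> B) \<le> r A + r B"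
    by (rule m_sub[OF m])
  have u: "(F - S) \<union> (F - {a}) = F" using insert by auto
  have i: "(F - S) \<inter> (F - {a}) = F - insert a S" by auto
  have "r ((F - S) \<union> (F - {a})) + r ((F - S) \<inter> (F - {a})) \<le> r (F - S) + r (F - {a})"
    by (rule sub) (use F in auto)
  hence "r F + r (F - insert a S) \<le> r (F - S) + r (F - {a})" using u i by simp
  moreover have "r (F - {a}) < r E" using h insert by auto
  moreover have "r (F - S) + card S \<le> r E" using insert by auto
  ultimately show ?case using insert F by simp
qed

theorem proposition4p1:
  fixes E :: "'a set" and r :: "'a set \<Rightarrow> nat" and n :: nat and x y :: "nat \<Rightarrow> 'a"
  assumes "matroid E r"
    and "n_connected 3 E r"
    and "simple E r"
    and "r E \<ge> 4"
    and "carambole E r n x y"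
  shows "dual_rank E r (x ` {1..n}) = 2 \<and> card (x ` {1..n}) = card (y ` {1..n})"
proof -
  define L where "L = y ` {1..n}"
  define X where "X = x ` {1..n}"
  define R where "R = r E"
  note m = assms(1)
  have finE: "finite E" using m_fin[OF m] .
  have cardle: "\<And>A. A \<subseteq> E \<Longrightarrow> r A \<le> card A" by (rule m_card[OF m])
  have mono: "\<And>A B. A \<subseteq> B \<Longrightarrow> B \<subseteq> E \<Longrightarrow> r A \<le> r B" by (rule m_mono[OF m])
  have sub: "\<And>A B. A \<subseteq> E \<Longrightarrow> B \<subseteq> E \<Longrightarrow> r (A \<union> B) + r (A \<inter> B) \<le> r A + r B"
    by (rule m_sub[OF m])
  have n3: "n \<ge> 3" and xyE: "\<forall>i\<in>{1..n}. x i \<in> E \<and> y i \<in> E"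
    and LE: "L \<subseteq> E" and rL: "r L = 2" and cL: "card L = n"
    and coc: "\<forall>i\<in>{1..n}. cocircuit E r ((L - {y i}) \<union> {x i})"
    using assms(5) unfolding carambole_def line_def L_def by auto
  have nosep: "\<And>A. A \<subseteq> E \<Longrightarrow> card A \<ge> 2 \<Longrightarrow> card (E - A) \<ge> 2 \<Longrightarrow> r A + r (E - A) - R \<ge> 2"
  proof -
    fix A assume "A \<subseteq> E" "card A \<ge> 2" "card (E - A) \<ge> 2"
    moreover have "\<not> separation E r 2 A" using assms(2) unfolding n_connected_def by simp
    ultimately show "r A + r (E - A) - R \<ge> 2" unfolding separation_def R_def by simp
  qed
  have injy: "inj_on y {1..n}" using cL unfolding L_def
    by (simp add: inj_on_iff_eq_card)
  have "r (L \<union> (E - L)) + r (L \<inter> (E - L)) \<le> r L + r (E - L)" by (rule sub) (use LE in auto)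
  moreover have "L \<union> (E - L) = E" using LE by auto
  ultimately have "R \<le> 2 + r (E - L)" using rL R_def by simp
  hence "r (E - L) \<ge> 2" using assms(4) R_def by simp
  hence "card (E - L) \<ge> 2" using cardle[of "E - L"] by simp
  hence "r L + r (E - L) - R \<ge> 2" using nosep[OF LE] cL n3 by simp
  hence rEL: "r (E - L) = R" using mono[of "E - L" E] rL R_def by simp
  have dep: "\<And>i. i \<in> {1..n} \<Longrightarrow> r (E - ((L - {y i}) \<union> {x i})) < R"
    using cocirc_dep[OF m] coc unfolding R_def by simp
  have xnL: "\<And>i. i \<in> {1..n} \<Longrightarrow> x i \<notin> L"
  proof
    fix i assume i: "i \<in> {1..n}" and "x i \<in> L"
    hence "E - L \<subseteq> E - ((L - {y i}) \<union> {x i})" by auto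
    hence "r (E - L) \<le> r (E - ((L - {y i}) \<union> {x i}))" by (rule mono) auto
    thus False using dep[OF i] rEL by simp
  qed
  have injx: "inj_on x {1..n}"
  proof (rule inj_onI, rule ccontr)
    fix i j assume i: "i \<in> {1..n}" and j: "j \<in> {1..n}" and eq: "x i = x j" and ne: "i \<noteq> j"
    define a where "a = x i"
    define Z where "Z = E - L - {a}"
    have aE: "a \<in> E" using xyE i a_def by auto
    have anL: "a \<notin> L" using xnL i a_def by auto
    have yiL: "y i \<in> L" and yjL: "y j \<in> L" using i j L_def by auto
    have yne: "y i \<noteq> y j" using inj_onD[OF injy _ i j] ne by blast
    have e1: "E - ((L - {y i}) \<union> {x i}) = Z \<union> {y i}" using yiL LE a_def Z_def anL by auto
    have e2: "E - ((L - {y j}) \<union> {x j}) = Z \<union> {y j}" using yjL LE eq a_def Z_def anL by auto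
    have r1: "r (Z \<union> {y i}) < R" using dep[OF i] e1 by simp
    have r2: "r (Z \<union> {y j}) < R" using dep[OF j] e2 by simp
    have "r (E - ((L - {y i}) \<union> {x i} - {y j})) = r E"
      apply (rule cocirc_min[OF m])
      using coc i yjL yne anL a_def by auto
    moreover have "E - ((L - {y i}) \<union> {x i} - {y j}) = (Z \<union> {y i}) \<union> (Z \<union> {y j})"
      using yiL yjL LE a_def Z_def anL yne by auto
    ultimately have r3: "r ((Z \<union> {y i}) \<union> (Z \<union> {y j})) = R" using R_def by simp
    have "(Z \<union> {y i}) \<inter> (Z \<union> {y j}) = Z" using yiL yjL yne Z_def by auto
    moreover have "r ((Z \<union> {y i}) \<union> (Z \<union> {y j})) + r ((Z \<union> {y i}) \<inter> (Z \<union> {y j}))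
        \<le> r (Z \<union> {y i}) + r (Z \<union> {y j})"
      using sub Z_def LE yiL yjL by (intro sub) auto
    ultimately have rZ: "r Z + 2 \<le> R" using r1 r2 r3 by simp
    have "r (Z \<union> {a}) + r (Z \<inter> {a}) \<le> r Z + r {a}" using sub Z_def aE by (intro sub) auto
    moreover have "Z \<union> {a} = E - L" using Z_def aE anL by auto
    moreover have "r {a} \<le> 1" using cardle[of "{a}"] aE by simp
    ultimately show False using rEL rZ by simp
  qed
  have cX: "card X = n" using injx X_def by (simp add: card_image)
  have XE: "X \<subseteq> E" using xyE X_def by auto
  have XL: "X \<inter> L = {}" using xnL X_def by auto
  have h: "\<forall>z\<in>X. r (E - L - {z}) < R"
  proof
    fix z assume "z \<in> X"
    then obtain i where i: "i \<in> {1..n}" and z: "z = x i" using X_def by auto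
    have "E - L - {z} \<subseteq> E - ((L - {y i}) \<union> {x i})" using z by auto
    hence "r (E - L - {z}) \<le> r (E - ((L - {y i}) \<union> {x i}))" by (rule mono) auto
    thus "r (E - L - {z}) < R" using dep[OF i] by simp
  qed
  have finX: "finite X" using X_def by simp
  have col: "r (E - L - X) + card X \<le> R"
    using coloops[OF m, of "E - L" X X] h finX rEL R_def by auto
  have "r ((E - L - X) \<union> L) + r ((E - L - X) \<inter> L) \<le> r (E - L - X) + r L" using sub LE by (intro sub) auto
  moreover have "(E - L - X) \<union> L = E - X" using LE XL by auto
  ultimately have up: "r (E - X) \<le> r (E - L - X) + 2" using rL by simp
  have "card (E - X) \<ge> card L" using LE XL finE by (intro card_mono) auto
  hence "r X + r (E - X) - R \<ge> 2" using nosep[OF XE] cX cL n3 by simp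
  moreover have "r X \<le> n" using cardle[OF XE] cX by simp
  ultimately have low: "n + r (E - X) \<ge> R + 2" by simp
  have "dual_rank E r X = 2" unfolding dual_rank_def using cX col up low R_def by simp
  thus ?thesis using cX cL X_def L_def by simp
qed

end
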